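(* Let $X$ be a countable infinite set, $\mathcal{I}$ an ideal on $X$, and $\tau$ a zero-dimensional $\mathcal{I}$-crowded topology on $X$. Let $A\subseteq X$ and suppose $A$ admits a partition $A=\bigcup_{m\in\omega}A_m$ such that for every $m\in\omega$, $cl_\tau(A_m)=cl_\tau(A)$ and $A_m$ is $(\mathcal{I},\tau)$-crowded. Then there is a zero-dimensional $\mathcal{I}$-crowded topology $\tau'\supseteq\tau$ on $X$ such that $w(\tau')\le w(\tau)$, $A\in\tau'$, and $cl_{\tau'}(A)=cl_\tau(A)$.
   Context: An ideal on $X$ is a family of subsets of $X$ closed under subsets and finite unions; all ideals are assumed proper ($X\notin\mathcal{I}$) and free (every finite subset of $X$ is in $\mathcal{I}$). $\mathcal{I}^+=\mathcal{P}(X)\setminus\mathcal{I}$. A topology $\tau$ on $X$ is $\mathcal{I}$-crowded if $\tau\cap\mathcal{I}=\{\emptyset\}$. A set $A\subseteq X$ is $(\mathcal{I},\tau)$-crowded if for every $U\in\tau$, $A\cap U$ is either empty or belongs to $\mathcal{I}^+$. $w$ denotes weight. *)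

theory Defs
  imports "HOL-Analysis.Analysis" "HOL-Library.Equipollence"
begin

definition is_ideal_on :: "'a set \<Rightarrow> 'a set set \<Rightarrow> bool" where
  "is_ideal_on X I \<longleftrightarrow>
     I \<subseteq> Pow X \<and>
     (\<forall>A B. A \<in> I \<and> B \<subseteq> A \<longrightarrow> B \<in> I) \<and>
     (\<forall>A B. A \<in> I \<and> B \<in> I \<longrightarrow> A \<union> B \<in> I) \<and>
     X \<notin> I \<and>
     (\<forall>F. F \<subseteq> X \<and> finite F \<longrightarrow> F \<in> I)"

definition ideal_plus :: "'a set \<Rightarrow> 'a set set \<Rightarrow> 'a set set" where
  "ideal_plus X I = Pow X - I"

definition ideal_crowded_topology :: "'a set set \<Rightarrow> 'a topology \<Rightarrow> bool" where
  "ideal_crowded_topology I T \<longleftrightarrow> {U. openin T U} \<inter> I = {{}}"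

definition ideal_crowded_set :: "'a set set \<Rightarrow> 'a topology \<Rightarrow> 'a set \<Rightarrow> bool" where
  "ideal_crowded_set I T A \<longleftrightarrow>
     (\<forall>U. openin T U \<longrightarrow> A \<inter> U = {} \<or> A \<inter> U \<in> ideal_plus (topspace T) I)"

definition topology_base :: "'a topology \<Rightarrow> 'a set set \<Rightarrow> bool" where
  "topology_base T B \<longleftrightarrow>
     (\<forall>V\<in>B. openin T V) \<and> (\<forall>U. openin T U \<longrightarrow> (\<exists>\<U>. \<U> \<subseteq> B \<and> \<Union>\<U> = U))"

text \<open>w(T') \<le> w(T), where weight is (as usual, Engelking) the least cardinality of a base
  plus aleph_0.  Since cardinals are well-ordered this says: for every base B of T there is
  a base B' of T' with |B'| \<le> |B| + aleph_0.\<close>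
definition weight_le :: "'a topology \<Rightarrow> 'a topology \<Rightarrow> bool" where
  "weight_le T' T \<longleftrightarrow>
     (\<forall>B. topology_base T B \<longrightarrow>
        (\<exists>B'. topology_base T' B' \<and> B' \<lesssim> (B <+> (UNIV :: nat set))))"

end

theory Submission
  imports Defs
begin

definition Nb :: "(nat \<Rightarrow> 'a set) \<Rightarrow> 'a \<Rightarrow> 'a set \<Rightarrow> nat \<Rightarrow> 'a set" where
"Nb As x V n = {y\<in>V. (\<forall>k<n. y\<in>As k \<longrightarrow> x\<in>As k) \<and> (\<forall>k. x\<in>As k \<longrightarrow> y\<in>As k)}"

definition OT :: "'a topology \<Rightarrow> (nat\<Rightarrow>'a set) \<Rightarrow> 'a set \<Rightarrow> bool" where
"OT T As U \<longleftrightarrow> U \<subseteq> topspace T \<and> (\<forall>x\<in>U. \<exists>V n. openin T V \<and> x\<in>V \<and> Nb As x V n \<subseteq> U)"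

lemma Nb_trans: "y \<in> Nb As x V n \<Longrightarrow> Nb As y V n \<subseteq> Nb As x V n"
  unfolding Nb_def by blast

lemma Nb_sub: "Nb As x V n \<subseteq> V" unfolding Nb_def by blast
lemma Nb_self: "x \<in> V \<Longrightarrow> x \<in> Nb As x V n" unfolding Nb_def by blast
lemma Nb_mono: "V \<subseteq> V' \<Longrightarrow> n' \<le> n \<Longrightarrow> Nb As x V n \<subseteq> Nb As x V' n'"
  unfolding Nb_def by auto

lemma istop_OT: "istopology (OT T As)"
  unfolding istopology_def
proof (intro conjI allI impI)
  fix S U assume a1: "OT T As S" and a2: "OT T As U"
  then have a: "OT T As S \<and> OT T As U" by blast
  show "OT T As (S \<inter> U)"
    unfolding OT_def
  proof (intro conjI ballI)
    show "S \<inter> U \<subseteq> topspace T" using a unfolding OT_def by blast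
    fix x assume x: "x \<in> S \<inter> U"
    then have "x \<in> S" "x \<in> U" by auto
    obtain V n where V: "openin T V" "x\<in>V" "Nb As x V n \<subseteq> S"
      using a1 \<open>x \<in> S\<close> unfolding OT_def by blast
    obtain V' n' where V': "openin T V'" "x\<in>V'" "Nb As x V' n' \<subseteq> U"
      using a2 \<open>x \<in> U\<close> unfolding OT_def by blast
    have "Nb As x (V\<inter>V') (max n n') \<subseteq> Nb As x V n"
      by (rule Nb_mono) auto
    moreover have "Nb As x (V\<inter>V') (max n n') \<subseteq> Nb As x V' n'"
      by (rule Nb_mono) auto
    ultimately have "Nb As x (V\<inter>V') (max n n') \<subseteq> S \<inter> U" using V V' by blast
    moreover have "openin T (V \<inter> V')" using V V' by (simp add: openin_Int)
    ultimately show "\<exists>V n. openin T V \<and> x \<in> V \<and> Nb As x V n \<subseteq> S \<inter> U"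
      using V V' by blast
  qed
next
  fix K assume K: "\<forall>S\<in>K. OT T As S"
  show "OT T As (\<Union>K)" unfolding OT_def
  proof (intro conjI ballI)
    show "\<Union>K \<subseteq> topspace T" using K unfolding OT_def by blast
    fix x assume "x \<in> \<Union>K"
    then obtain S where S: "S \<in> K" "x \<in> S" by blast
    have "OT T As S" using K S by blast
    then obtain V n where "openin T V" "x\<in>V" "Nb As x V n \<subseteq> S" using S unfolding OT_def by blast
    then show "\<exists>V n. openin T V \<and> x \<in> V \<and> Nb As x V n \<subseteq> \<Union>K" using S by blast
  qed
qed

lemma openin_OT: "openin (topology (OT T As)) = OT T As"
  using istop_OT by (rule topology_inverse')

lemma Nb_open: assumes V: "openin T V" shows "OT T As (Nb As x V n)"
  unfolding OT_def
proof (intro conjI ballI)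
  have "Nb As x V n \<subseteq> V" by (rule Nb_sub)
  also have "V \<subseteq> topspace T" using V by (rule openin_subset)
  finally show "Nb As x V n \<subseteq> topspace T" .
  fix y assume y: "y \<in> Nb As x V n"
  have "y \<in> V" using y Nb_sub[of As x V n] by (rule subsetD[rotated])
  moreover have "Nb As y V n \<subseteq> Nb As x V n" using y by (rule Nb_trans)
  ultimately show "\<exists>V' n'. openin T V' \<and> y \<in> V' \<and> Nb As y V' n' \<subseteq> Nb As x V n"
    using V by blast
qed

lemma T_open: assumes U: "openin T U" shows "OT T As U"
  unfolding OT_def
proof (intro conjI ballI)
  show "U \<subseteq> topspace T" using U by (rule openin_subset)
  fix x assume "x \<in> U"
  then show "\<exists>V n. openin T V \<and> x \<in> V \<and> Nb As x V n \<subseteq> U"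
    using U Nb_sub[of As x U 0] by blast
qed

lemma Nb_closed:
  assumes "closedin T C" "openin T C"
  shows "OT T As (topspace T - Nb As x C n)"
  unfolding OT_def
proof (intro conjI ballI)
  show "topspace T - Nb As x C n \<subseteq> topspace T" by blast
  fix y assume y: "y \<in> topspace T - Nb As x C n"
  show "\<exists>V n'. openin T V \<and> y \<in> V \<and> Nb As y V n' \<subseteq> topspace T - Nb As x C n"
  proof (cases "y \<in> C")
    case False
    have o: "openin T (topspace T - C)" using assms(1) by (simp add: closedin_def)
    have "Nb As y (topspace T - C) 0 \<subseteq> topspace T - C" by (rule Nb_sub)
    also have "\<dots> \<subseteq> topspace T - Nb As x C n" using Nb_sub[of As x C n] by blast
    finally show ?thesis using o y False by (intro exI[of _ "topspace T - C"] exI[of _ 0]) blast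
  next
    case True
    then have "(\<exists>k<n. y\<in>As k \<and> x\<notin>As k) \<or> (\<exists>k. x\<in>As k \<and> y\<notin>As k)"
      using y unfolding Nb_def by auto
    then show ?thesis
    proof
      assume "\<exists>k<n. y\<in>As k \<and> x\<notin>As k"
      then obtain k where k: "k<n" "y\<in>As k" "x\<notin>As k" by blast
      have d: "Nb As y C 0 \<inter> Nb As x C n = {}" using k unfolding Nb_def by blast
      have "Nb As y C 0 \<subseteq> topspace T" using Nb_sub openin_subset[OF assms(2)] by (rule subset_trans)
      then have "Nb As y C 0 \<subseteq> topspace T - Nb As x C n" using d by blast
      then show ?thesis using True assms(2) by (intro exI[of _ C]) blast
    next
      assume "\<exists>k. x\<in>As k \<and> y\<notin>As k"
      then obtain k where k: "x\<in>As k" "y\<notin>As k" by blast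
      have d: "Nb As y C (Suc k) \<inter> Nb As x C n = {}" using k unfolding Nb_def by blast
      have "Nb As y C (Suc k) \<subseteq> topspace T" using Nb_sub openin_subset[OF assms(2)] by (rule subset_trans)
      then have "Nb As y C (Suc k) \<subseteq> topspace T - Nb As x C n" using d by blast
      then show ?thesis using True assms(2) by (intro exI[of _ C]) blast
    qed
  qed
qed

lemma card_aux:
  fixes B :: "'b set"
  assumes "B \<noteq> {}"
  shows "B \<times> (UNIV :: (bool \<times> nat) set) \<lesssim> B <+> (UNIV :: nat set)"
proof (cases "finite B")
  case True
  then have "countable (B \<times> (UNIV :: (bool \<times> nat) set))"
    using countable_SIGMA[OF countable_finite[OF True], of "\<lambda>_. UNIV::(bool\<times>nat) set"] by simp
  then have "B \<times> (UNIV :: (bool \<times> nat) set) \<lesssim> (UNIV :: nat set)"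
    unfolding countable_def lepoll_def by blast
  moreover have "(UNIV :: nat set) \<lesssim> B <+> (UNIV :: nat set)"
    unfolding lepoll_def by (rule exI[of _ Inr]) auto
  ultimately show ?thesis using lepoll_trans by blast
next
  case False
  have "(UNIV :: (bool \<times> nat) set) \<lesssim> (UNIV :: nat set)"
    unfolding lepoll_def by (rule exI[of _ "to_nat"]) auto
  also have "(UNIV :: nat set) \<lesssim> B" using False infinite_le_lepoll by blast
  finally have "\<exists>f. inj_on f (UNIV :: (bool \<times> nat) set) \<and> f ` UNIV \<subseteq> B"
    unfolding lepoll_def .
  then have "ordLeq3 (card_of (UNIV :: (bool \<times> nat) set)) (card_of B)"
    by (simp only: card_of_ordLeq)
  then have "ordIso2 (card_of (B \<times> (UNIV :: (bool \<times> nat) set))) (card_of B)"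
    by (rule conjunct1[OF card_of_Times_infinite[OF False UNIV_not_empty]])
  then have "B \<times> (UNIV :: (bool \<times> nat) set) \<approx> B" by (simp only: eqpoll_iff_card_of_ordIso)
  moreover have "B \<lesssim> B <+> (UNIV :: nat set)"
    unfolding lepoll_def by (rule exI[of _ Inl]) auto
  ultimately show ?thesis by (metis eqpoll_imp_lepoll lepoll_trans)
qed

theorem mainTheorem1:
  fixes X :: "'a set" and I :: "'a set set" and T :: "'a topology"
    and A :: "'a set" and As :: "nat \<Rightarrow> 'a set"
  assumes "countable X" and "infinite X"
    and "is_ideal_on X I"
    and "topspace T = X" and "T dim_le 0" and "ideal_crowded_topology I T"
    and "A \<subseteq> X"
    and "(\<Union>m. As m) = A"
    and "\<And>m n. m \<noteq> n \<Longrightarrow> As m \<inter> As n = {}"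
    and "\<And>m. T closure_of (As m) = T closure_of A"
    and "\<And>m. ideal_crowded_set I T (As m)"
  shows "\<exists>T'. topspace T' = X \<and> T' dim_le 0 \<and> ideal_crowded_topology I T' \<and>
              (\<forall>U. openin T U \<longrightarrow> openin T' U) \<and>
              weight_le T' T \<and>
              openin T' A \<and>
              T' closure_of A = T closure_of A"
proof -
  note topX = assms(4)
  note disj = assms(9)
  define T' where "T' = topology (OT T As)"
  have oT': "openin T' = OT T As" by (simp add: T'_def openin_OT)
  have fin: "\<And>U. openin T U \<Longrightarrow> openin T' U" unfolding oT' by (rule T_open)
  have top: "topspace T' = X"
  proof
    have "OT T As (topspace T')" using openin_topspace[of T'] unfolding oT' .
    then show "topspace T' \<subseteq> X" unfolding OT_def topX by (elim conjE)
    have "openin T' X" using fin[OF openin_topspace[of T]] topX by simp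
    then show "X \<subseteq> topspace T'" by (rule openin_subset)
  qed
  have uniq: "\<And>y k m. y \<in> As k \<Longrightarrow> y \<in> As m \<Longrightarrow> k = m"
  proof (rule ccontr)
    fix y k m assume "y \<in> As k" "y \<in> As m" "k \<noteq> m"
    then have "y \<in> As k \<inter> As m" by simp
    then show False using disj[OF \<open>k \<noteq> m\<close>] by simp
  qed
  have xA: "\<And>x. x \<in> A \<longleftrightarrow> (\<exists>m. x \<in> As m)" unfolding assms(8)[symmetric] by simp
  have inA: "V \<inter> As m \<subseteq> Nb As x V n" if xm: "x \<in> As m" for x m V n
  proof
    fix y assume y: "y \<in> V \<inter> As m"
    then have yV: "y \<in> V" and ym: "y \<in> As m" by auto
    have c1: "\<forall>k<n. y \<in> As k \<longrightarrow> x \<in> As k"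
    proof (intro allI impI)
      fix k assume "k < n" "y \<in> As k"
      then have "k = m" using uniq[OF _ ym] by simp
      then show "x \<in> As k" using xm by simp
    qed
    have c2: "\<forall>k. x \<in> As k \<longrightarrow> y \<in> As k"
    proof (intro allI impI)
      fix k assume "x \<in> As k"
      then have "k = m" using uniq[OF _ xm] by simp
      then show "y \<in> As k" using ym by simp
    qed
    show "y \<in> Nb As x V n" unfolding Nb_def using yV c1 c2 by (rule CollectI[of _ y, OF conjI[OF _ conjI]])
  qed
  have notA: "V - \<Union>(As ` {..<n}) \<subseteq> Nb As x V n" if xn: "x \<notin> A" for x V n
  proof
    fix y assume y: "y \<in> V - \<Union>(As ` {..<n})"
    have nx: "\<forall>k. x \<notin> As k" using xn xA by simp
    have c1: "\<forall>k<n. y \<in> As k \<longrightarrow> x \<in> As k" using y by auto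
    have c2: "\<forall>k. x \<in> As k \<longrightarrow> y \<in> As k" using nx by simp
    have yV: "y \<in> V" using y by simp
    show "y \<in> Nb As x V n" unfolding Nb_def using yV c1 c2 by (rule CollectI[of _ y, OF conjI[OF _ conjI]])
  qed
  have notA2: "V \<inter> As n \<subseteq> Nb As x V n" if xn: "x \<notin> A" for x V n
  proof
    fix y assume y: "y \<in> V \<inter> As n"
    then have yV: "y \<in> V" and yn: "y \<in> As n" by auto
    have nx: "\<forall>k. x \<notin> As k" using xn xA by simp
    have c1: "\<forall>k<n. y \<in> As k \<longrightarrow> x \<in> As k"
    proof (intro allI impI)
      fix k assume "k < n" "y \<in> As k"
      then have "k = n" using uniq[OF _ yn] by simp
      then show "x \<in> As k" using \<open>k < n\<close> by simp
    qed
    have c2: "\<forall>k. x \<in> As k \<longrightarrow> y \<in> As k" using nx by simp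
    show "y \<in> Nb As x V n" unfolding Nb_def using yV c1 c2 by (rule CollectI[of _ y, OF conjI[OF _ conjI]])
  qed
  have openA: "openin T' A"
    unfolding oT' OT_def
  proof (intro conjI ballI)
    show "A \<subseteq> topspace T" using assms(7) topX by simp
    fix x assume "x \<in> A"
    then obtain m where m: "x \<in> As m" using xA by blast
    have "Nb As x (topspace T) 0 \<subseteq> A" using m xA unfolding Nb_def by blast
    then show "\<exists>V n. openin T V \<and> x \<in> V \<and> Nb As x V n \<subseteq> A"
      using \<open>A \<subseteq> topspace T\<close> \<open>x \<in> A\<close> openin_topspace by blast
  qed
  have clos: "T' closure_of A = T closure_of A"
  proof
    show "T' closure_of A \<subseteq> T closure_of A"
      using fin top topX by (auto simp: in_closure_of)
    show "T closure_of A \<subseteq> T' closure_of A"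
    proof
      fix x assume x: "x \<in> T closure_of A"
      show "x \<in> T' closure_of A"
      proof (cases "x \<in> A")
        case True
        then show ?thesis using closure_of_subset assms(7) top by blast
      next
        case False
        have "x \<in> X" using closure_of_subset_topspace[of T A] x topX by blast
        moreover have "\<exists>y\<in>A. y \<in> U" if U: "x \<in> U" "openin T' U" for U
        proof -
          obtain V n where V: "openin T V" "x \<in> V" "Nb As x V n \<subseteq> U"
            using U unfolding oT' OT_def by blast
          have "x \<in> T closure_of As n" using x assms(10) by simp
          then obtain y where "y \<in> As n" "y \<in> V" using V by (auto simp: in_closure_of)
          then show ?thesis using notA2[OF False, of V n] V xA by blast
        qed
        ultimately show ?thesis using top by (auto simp: in_closure_of)
      qed
    qed
  qed
  have dim: "T' dim_le 0"
    unfolding dimension_le_0_neighbourhood_base_of_clopen neighbourhood_base_of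
  proof (intro allI impI)
    fix W x assume W: "openin T' W \<and> x \<in> W"
    then obtain V0 n where V0: "openin T V0" "x \<in> V0" "Nb As x V0 n \<subseteq> W"
      unfolding oT' OT_def by blast
    have nb: "neighbourhood_base_of (\<lambda>U. closedin T U \<and> openin T U) T"
      using assms(5) by (simp add: dimension_le_0_neighbourhood_base_of_clopen)
    have "\<exists>U C. openin T U \<and> (closedin T C \<and> openin T C) \<and> x \<in> U \<and> U \<subseteq> C \<and> C \<subseteq> V0"
      using nb[unfolded neighbourhood_base_of, rule_format, of V0 x] V0(1,2) by blast
    then obtain U C where C: "openin T U" "closedin T C" "openin T C" "x \<in> U" "U \<subseteq> C" "C \<subseteq> V0"
      by blast
    have o: "openin T' (Nb As x C n)" unfolding oT' by (rule Nb_open[OF C(3)])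
    have "openin T' (X - Nb As x C n)" unfolding oT' using Nb_closed[OF C(2) C(3), of As x n] topX by simp
    then have c: "closedin T' (Nb As x C n)"
      unfolding closedin_def top using openin_subset[OF o] top by simp
    have xC: "x \<in> C" using C(4,5) by blast
    have "x \<in> Nb As x C n" using xC by (rule Nb_self)
    moreover have "Nb As x C n \<subseteq> W" using Nb_mono[of C V0 n n As x] C(6) V0(3) by blast
    ultimately show "\<exists>U V. openin T' U \<and> (closedin T' V \<and> openin T' V) \<and> x \<in> U \<and> U \<subseteq> V \<and> V \<subseteq> W"
      using o c by blast
  qed
  have id: "is_ideal_on X I" by fact
  have idsub: "\<forall>A B. A \<in> I \<and> B \<subseteq> A \<longrightarrow> B \<in> I" using id unfolding is_ideal_on_def by (elim conjE)
  have idfin: "\<forall>F. F \<subseteq> X \<and> finite F \<longrightarrow> F \<in> I" using id unfolding is_ideal_on_def by (elim conjE)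
  have crowd: "ideal_crowded_topology I T'"
    unfolding ideal_crowded_topology_def
  proof
    have "{} \<in> I" using idfin by blast
    then show "{{}} \<subseteq> {U. openin T' U} \<inter> I" by simp
    show "{U. openin T' U} \<inter> I \<subseteq> {{}}"
    proof (rule ccontr)
      assume "\<not> ?thesis"
      then obtain U x where U: "openin T' U" "U \<in> I" "x \<in> U" by blast
      then obtain V n where V: "openin T V" "x \<in> V" "Nb As x V n \<subseteq> U"
        unfolding oT' OT_def by blast
      have sub: "\<And>S. S \<subseteq> U \<Longrightarrow> S \<in> I" using idsub U(2) by blast
      show False
      proof (cases "x \<in> A")
        case True
        then obtain m where m: "x \<in> As m" using xA by blast
        have "V \<inter> As m \<subseteq> U" using inA[OF m, of V n] V(3) by (rule subset_trans)
        then have inI: "As m \<inter> V \<in> I" using sub by (simp add: Int_commute)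
        have ne: "As m \<inter> V \<noteq> {}" using m V(2) by blast
        have "As m \<inter> V = {} \<or> As m \<inter> V \<in> ideal_plus (topspace T) I"
          using assms(11)[of m] V(1) unfolding ideal_crowded_set_def by blast
        then show False using inI ne unfolding ideal_plus_def by blast
      next
        case False
        have "V \<inter> As n \<subseteq> U" using notA2[OF False, of V n] V(3) by (rule subset_trans)
        then have inI: "As n \<inter> V \<in> I" using sub by (simp add: Int_commute)
        have "As n \<inter> V = {} \<or> As n \<inter> V \<in> ideal_plus (topspace T) I"
          using assms(11)[of n] V(1) unfolding ideal_crowded_set_def by blast
        then have e: "V \<inter> As n = {}" using inI unfolding ideal_plus_def by blast
        have "V \<inter> T closure_of As n = {}" using openin_Int_closure_of_eq_empty[OF V(1)] e by simp
        then have e2: "V \<inter> T closure_of A = {}" using assms(10)[of n] by simp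
        have "A \<subseteq> T closure_of A" using closure_of_subset[of A T] assms(7) topX by simp
        then have "V \<inter> A = {}" using e2 by blast
        then have "\<forall>y\<in>V. \<forall>k. y \<notin> As k" using xA by blast
        then have "Nb As x V n = V" using V(2) unfolding Nb_def by auto
        then have "V \<in> I" using sub V(3) by simp
        moreover have "V \<in> {U. openin T U}" using V(1) by simp
        ultimately have "V \<in> {{}}" using assms(6) unfolding ideal_crowded_topology_def by blast
        then show False using V(2) by simp
      qed
    qed
  qed
  have weight: "weight_le T' T"
    unfolding weight_le_def
  proof (intro allI impI)
    fix B assume B: "topology_base T B"
    define D where "D = (\<lambda>b n. if b then As n else X - \<Union>(As ` {..<n}))"
    define B' where "B' = (\<lambda>(V,b,n). V \<inter> D b n) ` (B \<times> (UNIV :: (bool \<times> nat) set))"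
    have Bo: "\<forall>V\<in>B. openin T V" using B unfolding topology_base_def by (elim conjE)
    have Bu: "\<forall>U. openin T U \<longrightarrow> (\<exists>\<U>. \<U> \<subseteq> B \<and> \<Union>\<U> = U)"
      using B unfolding topology_base_def by (elim conjE)
    obtain \<U> where U0: "\<U> \<subseteq> B" "\<Union>\<U> = X" using Bu openin_topspace[of T] topX by metis
    have "B \<noteq> {}"
    proof
      assume "B = {}"
      then have "X = {}" using U0 by blast
      then show False using assms(2) by simp
    qed
    then have card: "B' \<lesssim> B <+> (UNIV :: nat set)"
      unfolding B'_def by (rule lepoll_trans[OF image_lepoll card_aux])
    have opB': "openin T' W" if "W \<in> B'" for W
    proof -
      obtain V b n where Vb: "V \<in> B" "W = V \<inter> D b n" using \<open>W \<in> B'\<close> unfolding B'_def by auto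
      have oV: "openin T V" using Vb(1) Bo by blast
      have VX: "V \<subseteq> X" using openin_subset[OF oV] topX by simp
      show ?thesis
        unfolding oT' OT_def
      proof (intro conjI ballI)
        show "W \<subseteq> topspace T" using Vb(2) VX topX by blast
        fix y assume y: "y \<in> W"
        show "\<exists>V n. openin T V \<and> y \<in> V \<and> Nb As y V n \<subseteq> W"
        proof (cases b)
          case True
          then have "Nb As y V 0 \<subseteq> W" using y Vb(2) unfolding Nb_def D_def by auto
          moreover have "y \<in> V" using y Vb(2) by blast
          ultimately show ?thesis using oV by blast
        next
          case False
          then have "Nb As y V n \<subseteq> W" using y Vb(2) VX unfolding Nb_def D_def by auto
          moreover have "y \<in> V" using y Vb(2) by blast
          ultimately show ?thesis using oV by blast
        qed
      qed
    qed
    have "topology_base T' B'"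
      unfolding topology_base_def
    proof (intro conjI ballI allI impI)
      show "\<And>W. W \<in> B' \<Longrightarrow> openin T' W" by (rule opB')
      fix U assume U: "openin T' U"
      have "U \<subseteq> \<Union>{W\<in>B'. W \<subseteq> U}"
      proof
        fix x assume x: "x \<in> U"
        then obtain V0 n where V0: "openin T V0" "x \<in> V0" "Nb As x V0 n \<subseteq> U"
          using U unfolding oT' OT_def by blast
        obtain \<V> where "\<V> \<subseteq> B" "\<Union>\<V> = V0" using Bu V0(1) by blast
        then obtain W where W: "W \<in> B" "x \<in> W" "W \<subseteq> V0" using V0(2) by blast
        have xX: "x \<in> X" using openin_subset[OF V0(1)] V0(2) topX by blast
        have NU: "Nb As x W n \<subseteq> U" using Nb_mono[of W V0 n n As x] W V0 by blast
        show "x \<in> \<Union>{W\<in>B'. W \<subseteq> U}"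
        proof (cases "x \<in> A")
          case True
          then obtain m where m: "x \<in> As m" using xA by blast
          have i: "W \<inter> D True m \<in> B'" using W(1) unfolding B'_def
            by (intro image_eqI[of _ _ "(W,True,m)"]) auto
          have eq: "W \<inter> D True m = W \<inter> As m" by (simp add: D_def)
          have s: "W \<inter> D True m \<subseteq> U" unfolding eq using inA[OF m, of W n] NU by (rule subset_trans)
          have "x \<in> W \<inter> D True m" unfolding eq using W(2) m by simp
          then show ?thesis using i s by blast
        next
          case False
          have i: "W \<inter> D False n \<in> B'" using W(1) unfolding B'_def
            by (intro image_eqI[of _ _ "(W,False,n)"]) auto
          have eq: "W \<inter> D False n \<subseteq> W - \<Union>(As ` {..<n})" by (auto simp add: D_def)
          have s: "W \<inter> D False n \<subseteq> U" using eq notA[OF False, of W n] NU by (meson subset_trans)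
          have "\<forall>k. x \<notin> As k" using False xA by simp
          then have "x \<in> W \<inter> D False n" using W(2) xX by (simp add: D_def)
          then show ?thesis using i s by blast
        qed
      qed
      then show "\<exists>\<U>. \<U> \<subseteq> B' \<and> \<Union>\<U> = U" by (intro exI[of _ "{W\<in>B'. W \<subseteq> U}"]) auto
    qed
    then show "\<exists>B'. topology_base T' B' \<and> B' \<lesssim> B <+> (UNIV :: nat set)" using card by blast
  qed
  have fin': "\<forall>U. openin T U \<longrightarrow> openin T' U" using fin by blast
  show ?thesis
    by (rule exI[of _ T'], intro conjI; fact)
qed

end
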